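(* There is an absolute constant $c>0$ such that for any two disjoint finite point sets $P,S$ in the plane with $P\cup S$ generic, every edge $e$ of $T_P$ crosses at most $c$ edges of $T_S$ whose length is at least the length of $e$.
   Context: A finite planar point set is in general position if no three of its points are collinear; it is generic if it is in general position and every subset has a unique Euclidean minimum spanning tree (MST). For a generic set $X$, $T_X$ denotes its MST, with edges drawn as straight segments. *)

theory Defs
  imports "HOL-Analysis.Analysis"
begin

type_synonym point = "real^2"

definition edges_on :: "point set \<Rightarrow> point set set" where
  "edges_on X = {{a, b} | a b. a \<in> X \<and> b \<in> X \<and> a \<noteq> b}"

definition edge_len :: "point set \<Rightarrow> real" where
  "edge_len e = Max {dist a b | a b. a \<in> e \<and> b \<in> e}"

definition edge_rel :: "point set set \<Rightarrow> (point \<times> point) set" where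
  "edge_rel E = {(a, b). {a, b} \<in> E}"

text \<open>Spanning tree: connected, with |X|-1 edges (hence acyclic).\<close>
definition is_spanning_tree :: "point set \<Rightarrow> point set set \<Rightarrow> bool" where
  "is_spanning_tree X E \<longleftrightarrow>
     E \<subseteq> edges_on X \<and>
     (\<forall>a\<in>X. \<forall>b\<in>X. (a, b) \<in> (edge_rel E)\<^sup>*) \<and>
     card E = card X - 1"

definition weight :: "point set set \<Rightarrow> real" where
  "weight E = (\<Sum>e\<in>E. edge_len e)"

definition is_MST :: "point set \<Rightarrow> point set set \<Rightarrow> bool" where
  "is_MST X E \<longleftrightarrow> is_spanning_tree X E \<and>
     (\<forall>E'. is_spanning_tree X E' \<longrightarrow> weight E \<le> weight E')"

definition general_position :: "point set \<Rightarrow> bool" where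
  "general_position X \<longleftrightarrow>
     (\<forall>a\<in>X. \<forall>b\<in>X. \<forall>c\<in>X. a \<noteq> b \<and> a \<noteq> c \<and> b \<noteq> c \<longrightarrow> \<not> collinear {a, b, c})"

definition generic :: "point set \<Rightarrow> bool" where
  "generic X \<longleftrightarrow> finite X \<and> general_position X \<and> (\<forall>Y\<subseteq>X. \<exists>!E. is_MST Y E)"

definition MST :: "point set \<Rightarrow> point set set" where
  "MST X = (THE E. is_MST X E)"

definition crosses :: "point set \<Rightarrow> point set \<Rightarrow> bool" where
  "crosses e f \<longleftrightarrow> convex hull e \<inter> convex hull f \<noteq> {}"

end

theory Submission
  imports Defs
begin


lemma edge_len_pair: "edge_len {a, b} = dist a b"
proof -
  have "{dist x y |x y. x \<in> {a, b} \<and> y \<in> {a, b}} = {0, dist a b}"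
    by (auto simp: dist_commute)
  then show ?thesis unfolding edge_len_def by (simp add: max_def)
qed

lemma edges_on_finite: "finite X \<Longrightarrow> finite (edges_on X)"
proof -
  assume "finite X"
  have "edges_on X \<subseteq> Pow X" unfolding edges_on_def by auto
  then show ?thesis using \<open>finite X\<close> finite_subset by blast
qed

lemma edges_onD: "e \<in> edges_on X \<Longrightarrow> \<exists>a b. e = {a,b} \<and> a \<in> X \<and> b \<in> X \<and> a \<noteq> b"
  unfolding edges_on_def by auto

lemma edge_pair_in: "{a, c} \<in> edges_on X \<Longrightarrow> a \<in> X \<and> c \<in> X \<and> a \<noteq> c"
  unfolding edges_on_def by (auto simp: doubleton_eq_iff)

lemma conn_card:
  fixes X :: "'a set"
  shows "finite X \<Longrightarrow> E \<subseteq> {{a, b} | a b. a \<in> X \<and> b \<in> X \<and> a \<noteq> b} \<Longrightarrow>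
    (\<forall>a\<in>X. \<forall>b\<in>X. (a, b) \<in> {(a, b). {a, b} \<in> E}\<^sup>*) \<Longrightarrow> card X \<le> card E + 1"
proof (induction "card X" arbitrary: X E rule: less_induct)
  case less
  show ?case
  proof (cases "card X \<le> 1")
    case True then show ?thesis by simp
  next
    case False
    let ?ES = "{{a, b} | a b. a \<in> X \<and> b \<in> X \<and> a \<noteq> b}"
    have finE: "finite E"
    proof -
      have "?ES \<subseteq> Pow X" by auto
      then have "E \<subseteq> Pow X" using less.prems(2) by (rule order.trans[rotated])
      moreover have "finite (Pow X)" using less.prems(1) by simp
      ultimately show ?thesis by (rule finite_subset)
    qed
    have "\<not> (\<forall>x\<in>X. \<forall>y\<in>X. x = y)"
      using False card_le_Suc0_iff_eq[OF less.prems(1)] by simp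
    then obtain a0 b0 where ab0: "a0 \<in> X" "b0 \<in> X" "a0 \<noteq> b0" by blast
    have "(a0, b0) \<in> {(a, b). {a, b} \<in> E}\<^sup>*" using less.prems(3) ab0 by blast
    then obtain c where "(a0, c) \<in> {(a, b). {a, b} \<in> E}"
    proof (cases rule: converse_rtranclE)
      case base then show ?thesis using ab0(3) by simp
    next
      case (step c) then show ?thesis using that by blast
    qed
    then have ac: "{a0, c} \<in> E" by simp
    then have "{a0, c} \<in> ?ES" using less.prems(2) by blast
    then have acX: "a0 \<in> X" "c \<in> X" "a0 \<noteq> c" by (auto simp: doubleton_eq_iff)
    define a where "a = a0"
    define b where "b = c"
    have ab: "{a, b} \<in> E" "a \<in> X" "b \<in> X" "a \<noteq> b" using ac acX by (auto simp: a_def b_def)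
    define \<phi> where "\<phi> x = (if x = b then a else x)" for x
    define X' where "X' = X - {b}"
    define E' where "E' = (\<lambda>e. \<phi> ` e) ` E - {{a}}"
    have cardX': "card X' = card X - 1" using ab less.prems(1) by (simp add: X'_def)
    have "{a} \<in> (\<lambda>e. \<phi> ` e) ` E"
    proof
      show "{a} = \<phi> ` {a, b}" by (auto simp: \<phi>_def)
    qed (rule ab(1))
    then have "card E' = card ((\<lambda>e. \<phi> ` e) ` E) - 1"
      unfolding E'_def using finE by (simp add: card_Diff_singleton)
    moreover have "card ((\<lambda>e. \<phi> ` e) ` E) \<le> card E" using finE by (rule card_image_le)
    ultimately have cardE': "card E' \<le> card E - 1" by simp
    have "card E \<noteq> 0" using ab(1) finE by auto
    then have Ene: "card E \<ge> 1" by simp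
    have phiX: "\<phi> x \<in> X'" if "x \<in> X" for x using that ab by (auto simp: \<phi>_def X'_def)
    have E'sub: "E' \<subseteq> {{a, b} | a b. a \<in> X' \<and> b \<in> X' \<and> a \<noteq> b}"
    proof
      fix e assume "e \<in> E'"
      then obtain e0 where e0: "e0 \<in> E" "e = \<phi> ` e0" "e \<noteq> {a}" unfolding E'_def by auto
      then obtain x y where xy: "e0 = {x, y}" "x \<in> X" "y \<in> X" "x \<noteq> y" using less.prems(2) by blast
      have "\<phi> x \<noteq> \<phi> y"
      proof
        assume "\<phi> x = \<phi> y"
        then have "e = {a}" using xy e0 by (auto simp: \<phi>_def split: if_splits)
        then show False using e0 by simp
      qed
      then show "e \<in> {{a, b} | a b. a \<in> X' \<and> b \<in> X' \<and> a \<noteq> b}"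
        using xy e0 phiX by blast
    qed
    have step: "(\<phi> x, \<phi> y) \<in> {(a, b). {a, b} \<in> E'}\<^sup>*" if "(x, y) \<in> {(a, b). {a, b} \<in> E}\<^sup>*" for x y
      using that
    proof (induction rule: rtrancl_induct)
      case base then show ?case by simp
    next
      case (step y z)
      show ?case
      proof (cases "\<phi> y = \<phi> z")
        case True then show ?thesis using step.IH by simp
      next
        case False
        have "{\<phi> y, \<phi> z} = \<phi> ` {y, z}" by simp
        moreover have "{y, z} \<in> E" using step.hyps(2) by simp
        moreover have "{\<phi> y, \<phi> z} \<noteq> {a}" using False by auto
        ultimately have "{\<phi> y, \<phi> z} \<in> E'" unfolding E'_def by blast
        then have "(\<phi> y, \<phi> z) \<in> {(a, b). {a, b} \<in> E'}" by simp
        with step.IH show ?thesis by (rule rtrancl_into_rtrancl)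
      qed
    qed
    have conn': "\<forall>x\<in>X'. \<forall>y\<in>X'. (x, y) \<in> {(a, b). {a, b} \<in> E'}\<^sup>*"
    proof (intro ballI)
      fix x y assume "x \<in> X'" "y \<in> X'"
      then have "x \<in> X" "y \<in> X" "\<phi> x = x" "\<phi> y = y" by (auto simp: X'_def \<phi>_def)
      then have "(x, y) \<in> {(a, b). {a, b} \<in> E}\<^sup>*" using less.prems(3) by blast
      from step[OF this] show "(x, y) \<in> {(a, b). {a, b} \<in> E'}\<^sup>*" using \<open>\<phi> x = x\<close> \<open>\<phi> y = y\<close> by simp
    qed
    have "card X' < card X" using cardX' False by simp
    moreover have "finite X'" using less.prems(1) by (simp add: X'_def)
    ultimately have "card X' \<le> card E' + 1" by (rule less.hyps[OF _ _ E'sub conn'])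
    then show ?thesis using cardX' cardE' Ene False by linarith
  qed
qed



lemma edge_rel_sym: "(a, b) \<in> (edge_rel E)\<^sup>* \<Longrightarrow> (b, a) \<in> (edge_rel E)\<^sup>*"
proof -
  assume h: "(a, b) \<in> (edge_rel E)\<^sup>*"
  have "(edge_rel E)\<inverse> = edge_rel E" unfolding edge_rel_def by (auto simp: insert_commute)
  then have "((edge_rel E)\<^sup>*)\<inverse> = (edge_rel E)\<^sup>*" by (metis rtrancl_converse)
  then show ?thesis using h by (metis converseI)
qed

lemma edge_rel_mono: "E \<subseteq> F \<Longrightarrow> (a, b) \<in> (edge_rel E)\<^sup>* \<Longrightarrow> (a, b) \<in> (edge_rel F)\<^sup>*"
proof -
  assume "E \<subseteq> F" "(a, b) \<in> (edge_rel E)\<^sup>*"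
  moreover have "edge_rel E \<subseteq> edge_rel F" using \<open>E \<subseteq> F\<close> unfolding edge_rel_def by auto
  ultimately show ?thesis using rtrancl_mono by blast
qed

lemma exit_step:
  assumes "(x, y) \<in> R\<^sup>*" "x \<in> A" "y \<notin> A"
  shows "\<exists>a b. (a, b) \<in> R \<and> a \<in> A \<and> b \<notin> A"
  using assms
proof (induction rule: rtrancl_induct)
  case base then show ?case by simp
next
  case (step y z)
  then show ?case by blast
qed

lemma mst_path:
  assumes fin: "finite X" and mst: "is_MST X E" and uniq: "\<And>E'. is_MST X E' \<Longrightarrow> E' = E"
    and st: "{s, t} \<in> E"
    and path: "(s, t) \<in> {(a, b). a \<in> X \<and> b \<in> X \<and> a \<noteq> b \<and> dist a b \<le> dist s t \<and> {a, b} \<noteq> {s, t}}\<^sup>*"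
  shows False
proof -
  let ?R = "{(a, b). a \<in> X \<and> b \<in> X \<and> a \<noteq> b \<and> dist a b \<le> dist s t \<and> {a, b} \<noteq> {s, t}}"
  have sp: "is_spanning_tree X E" using mst unfolding is_MST_def by simp
  then have Esub: "E \<subseteq> edges_on X" and conn: "\<forall>a\<in>X. \<forall>b\<in>X. (a, b) \<in> (edge_rel E)\<^sup>*"
    and cardE: "card E = card X - 1" unfolding is_spanning_tree_def by auto
  have stX: "s \<in> X" "t \<in> X" "s \<noteq> t" using st Esub edge_pair_in by blast+
  have finE: "finite E" using Esub edges_on_finite[OF fin] finite_subset by blast
  have cardX2: "card X \<ge> 2"
  proof -
    have "{s, t} \<subseteq> X" using stX by simp
    then have "card {s, t} \<le> card X" using card_mono[OF fin] by blast
    then show ?thesis using stX by simp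
  qed
  define E0 where "E0 = E - {{s, t}}"
  have cardE0: "card E0 = card E - 1" unfolding E0_def using st finE by simp
  have E0E: "E0 \<subseteq> E" unfolding E0_def by auto
  define A where "A = {v. (s, v) \<in> (edge_rel E0)\<^sup>*}"
  define B where "B = {v. (t, v) \<in> (edge_rel E0)\<^sup>*}"
  have cover: "v \<in> A \<or> v \<in> B" if "v \<in> X" for v
  proof -
    have "(s, v) \<in> (edge_rel E)\<^sup>*" using conn stX that by blast
    then show ?thesis
    proof (induction rule: rtrancl_induct)
      case base then show ?case by (simp add: A_def)
    next
      case (step y z)
      have yz: "{y, z} \<in> E" using step.hyps(2) unfolding edge_rel_def by simp
      show ?case
      proof (cases "{y, z} = {s, t}")
        case True
        then have "z = s \<or> z = t" by (auto simp: doubleton_eq_iff)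
        then show ?thesis by (auto simp: A_def B_def)
      next
        case False
        then have "(y, z) \<in> edge_rel E0" using yz unfolding E0_def edge_rel_def by simp
        then show ?thesis using step.IH unfolding A_def B_def
          by (meson mem_Collect_eq rtrancl.rtrancl_into_rtrancl)
      qed
    qed
  qed
  show False
  proof (cases "t \<in> A")
    case True
    have sall: "(s, v) \<in> (edge_rel E0)\<^sup>*" if "v \<in> X" for v
      using cover[OF that] True unfolding A_def B_def by (auto intro: rtrancl_trans)
    have conn0: "\<forall>a\<in>X. \<forall>b\<in>X. (a, b) \<in> {(a, b). {a, b} \<in> E0}\<^sup>*"
    proof (intro ballI)
      fix a b assume "a \<in> X" "b \<in> X"
      then have "(a, s) \<in> (edge_rel E0)\<^sup>*" "(s, b) \<in> (edge_rel E0)\<^sup>*" using sall edge_rel_sym by blast+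
      then show "(a, b) \<in> {(a, b). {a, b} \<in> E0}\<^sup>*" unfolding edge_rel_def by (rule rtrancl_trans)
    qed
    have "E0 \<subseteq> {{a, b} | a b. a \<in> X \<and> b \<in> X \<and> a \<noteq> b}" using E0E Esub unfolding edges_on_def by blast
    from conn_card[OF fin this conn0] have "card X \<le> card E0 + 1" .
    then show False using cardE0 cardE cardX2 by linarith
  next
    case False
    have "s \<in> A" unfolding A_def by simp
    from exit_step[OF path this False] obtain a b where ab: "(a, b) \<in> ?R" "a \<in> A" "b \<notin> A" by blast
    then have abX: "a \<in> X" "b \<in> X" "a \<noteq> b" "dist a b \<le> dist s t" "{a, b} \<noteq> {s, t}" by auto
    have gE: "{a, b} \<notin> E"
    proof
      assume "{a, b} \<in> E"
      then have "(a, b) \<in> edge_rel E0" using abX unfolding E0_def edge_rel_def by simp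
      then have "b \<in> A" using ab(2) unfolding A_def by (meson mem_Collect_eq rtrancl.rtrancl_into_rtrancl)
      then show False using ab by simp
    qed
    define E' where "E' = insert {a, b} E0"
    have gE0: "{a, b} \<notin> E0" using gE E0E by blast
    have finE0: "finite E0" using finE E0E finite_subset by blast
    have cardE': "card E' = card X - 1"
    proof -
      have "card E' = card E0 + 1" unfolding E'_def using gE0 finE0 by simp
      moreover have "card E \<ge> 1" using st finE by (metis One_nat_def Suc_leI card_gt_0_iff empty_iff)
      ultimately show ?thesis using cardE0 cardE by linarith
    qed
    have E'sub: "E' \<subseteq> edges_on X" unfolding E'_def using E0E Esub abX unfolding edges_on_def by blast
    have E0E': "E0 \<subseteq> E'" unfolding E'_def by auto
    have sall: "(s, v) \<in> (edge_rel E')\<^sup>*" if "v \<in> X" for v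
    proof -
      have bB: "b \<in> B" using cover[OF abX(2)] ab(3) by simp
      have "(s, a) \<in> (edge_rel E')\<^sup>*" using ab(2) edge_rel_mono[OF E0E'] unfolding A_def by blast
      moreover have "(a, b) \<in> edge_rel E'" unfolding E'_def edge_rel_def by simp
      ultimately have sb: "(s, b) \<in> (edge_rel E')\<^sup>*" by (rule rtrancl_into_rtrancl)
      have "(t, b) \<in> (edge_rel E')\<^sup>*" using bB edge_rel_mono[OF E0E'] unfolding B_def by blast
      then have "(b, t) \<in> (edge_rel E')\<^sup>*" by (rule edge_rel_sym)
      with sb have st': "(s, t) \<in> (edge_rel E')\<^sup>*" by (rule rtrancl_trans)
      show ?thesis
      proof (cases "v \<in> A")
        case True then show ?thesis using edge_rel_mono[OF E0E'] unfolding A_def by blast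
      next
        case False
        then have "v \<in> B" using cover[OF that] by simp
        then have "(t, v) \<in> (edge_rel E')\<^sup>*" using edge_rel_mono[OF E0E'] unfolding B_def by blast
        with st' show ?thesis by (rule rtrancl_trans)
      qed
    qed
    have conn': "\<forall>x\<in>X. \<forall>y\<in>X. (x, y) \<in> (edge_rel E')\<^sup>*"
    proof (intro ballI)
      fix x y assume "x \<in> X" "y \<in> X"
      then have "(x, s) \<in> (edge_rel E')\<^sup>*" "(s, y) \<in> (edge_rel E')\<^sup>*" using sall edge_rel_sym by blast+
      then show "(x, y) \<in> (edge_rel E')\<^sup>*" by (rule rtrancl_trans)
    qed
    have sp': "is_spanning_tree X E'" unfolding is_spanning_tree_def using E'sub conn' cardE' by blast
    have wE: "weight E = dist s t + weight E0"
      unfolding weight_def E0_def using finE st by (simp add: sum.remove edge_len_pair)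
    have wE': "weight E' = dist a b + weight E0"
      unfolding weight_def E'_def using finE0 gE0 by (simp add: edge_len_pair)
    have "is_MST X E'"
      unfolding is_MST_def
    proof (intro conjI allI impI)
      show "is_spanning_tree X E'" by (rule sp')
      fix E'' assume "is_spanning_tree X E''"
      then have "weight E \<le> weight E''" using mst unfolding is_MST_def by blast
      then show "weight E' \<le> weight E''" using wE wE' abX(4) by linarith
    qed
    then have "E' = E" by (rule uniq)
    then show False using gE unfolding E'_def by blast
  qed
qed



lemma core:
  fixes s1 t1 s2 t2 x1 x2 :: "real^2" and l1 l2 L1 L2 :: real
  assumes L1: "L1 = dist s1 t1" and L2: "L2 = dist s2 t2" and pos: "0 < L1" and le: "L1 \<le> L2"
   and x1: "x1 = s1 + l1 *\<^sub>R (t1 - s1)" and l1: "0 \<le> l1" "l1 \<le> 1/2"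
   and x2: "x2 = s2 + l2 *\<^sub>R (t2 - s2)" and l2: "0 \<le> l2" "l2 \<le> 1/2"
   and dx: "norm (x1 - x2) \<le> L1/100"
   and du: "norm ((1/L1) *\<^sub>R (t1 - s1) - (1/L2) *\<^sub>R (t2 - s2)) \<le> 1/100"
  shows "(dist s1 s2 < L2 \<and> dist s1 t2 < L2) \<or> (dist t1 s2 < L2 \<and> dist t1 t2 < L2) \<or>
         (dist s1 s2 \<le> L1/10 \<and> dist t1 t2 \<le> L1/10)"
proof -
  define u1 where "u1 = (1/L1) *\<^sub>R (t1 - s1)"
  define u2 where "u2 = (1/L2) *\<^sub>R (t2 - s2)"
  have pos2: "0 < L2" using pos le by linarith
  have t1e: "t1 = s1 + L1 *\<^sub>R u1" unfolding u1_def using pos by simp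
  have t2e: "t2 = s2 + L2 *\<^sub>R u2" unfolding u2_def using pos2 by simp
  have nu2: "norm u2 = 1" unfolding u2_def using pos2 L2 by (simp add: dist_norm norm_minus_commute)
  define d where "d = u1 - u2"
  have nd: "norm d \<le> 1/100" using du unfolding d_def u1_def u2_def .
  define \<sigma> where "\<sigma> = l2 * L2 - l1 * L1"
  define \<tau> where "\<tau> = \<sigma> + L1"
  define es where "es = s1 - (s2 + \<sigma> *\<^sub>R u2)"
  define et where "et = t1 - (s2 + \<tau> *\<^sub>R u2)"
  have x1e: "x1 = s1 + (l1 * L1) *\<^sub>R u1" using x1 t1e by simp
  have x2e: "x2 = s2 + (l2 * L2) *\<^sub>R u2" using x2 t2e by simp
  have es_eq: "es = (x1 - x2) - (l1 * L1) *\<^sub>R d"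
    unfolding es_def x1e x2e d_def \<sigma>_def by (simp add: algebra_simps)
  have "norm ((l1 * L1) *\<^sub>R d) = l1 * L1 * norm d" using l1 pos by simp
  also have "\<dots> \<le> l1 * L1 * (1/100)" using nd l1 pos by (intro mult_left_mono) auto
  finally have n1: "norm ((l1 * L1) *\<^sub>R d) \<le> l1 * L1 * (1/100)" .
  have nes: "norm es \<le> 3 * L1 / 200"
  proof -
    have "norm es \<le> norm (x1 - x2) + norm ((l1 * L1) *\<^sub>R d)" unfolding es_eq by (rule norm_triangle_ineq4)
    also have "\<dots> \<le> L1/100 + l1 * L1 * (1/100)" using dx n1 by linarith
    also have "\<dots> \<le> 3 * L1 / 200" using l1 pos by (simp add: field_simps)
    finally show ?thesis .
  qed
  have et_eq: "et = es + L1 *\<^sub>R d" unfolding et_def es_def \<tau>_def t1e d_def by (simp add: algebra_simps)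
  have "norm (L1 *\<^sub>R d) = L1 * norm d" using pos by simp
  also have "\<dots> \<le> L1 * (1/100)" using nd pos by (intro mult_left_mono) auto
  finally have n2: "norm (L1 *\<^sub>R d) \<le> L1/100" by simp
  have net: "norm et \<le> L1 / 40"
  proof -
    have "norm et \<le> norm es + norm (L1 *\<^sub>R d)" unfolding et_eq by (rule norm_triangle_ineq)
    then show ?thesis using nes n2 by linarith
  qed
  have gen: "dist (s2 + r *\<^sub>R u2 + e) s2 \<le> \<bar>r\<bar> + norm e \<and> dist (s2 + r *\<^sub>R u2 + e) t2 \<le> \<bar>r - L2\<bar> + norm e"
    for r e
  proof
    have "dist (s2 + r *\<^sub>R u2 + e) s2 = norm (r *\<^sub>R u2 + e)" by (simp add: dist_norm)
    also have "\<dots> \<le> norm (r *\<^sub>R u2) + norm e" by (rule norm_triangle_ineq)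
    finally show "dist (s2 + r *\<^sub>R u2 + e) s2 \<le> \<bar>r\<bar> + norm e" using nu2 by simp
    have "dist (s2 + r *\<^sub>R u2 + e) t2 = norm ((r - L2) *\<^sub>R u2 + e)" unfolding t2e by (simp add: dist_norm algebra_simps)
    also have "\<dots> \<le> norm ((r - L2) *\<^sub>R u2) + norm e" by (rule norm_triangle_ineq)
    finally show "dist (s2 + r *\<^sub>R u2 + e) t2 \<le> \<bar>r - L2\<bar> + norm e" using nu2 by simp
  qed
  have s1e: "s1 = s2 + \<sigma> *\<^sub>R u2 + es" unfolding es_def by simp
  have t1e': "t1 = s2 + \<tau> *\<^sub>R u2 + et" unfolding et_def by simp
  have a1: "dist s1 s2 \<le> \<bar>\<sigma>\<bar> + norm es" "dist s1 t2 \<le> \<bar>\<sigma> - L2\<bar> + norm es"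
    using gen[of \<sigma> es] s1e by simp_all
  have a2: "dist t1 s2 \<le> \<bar>\<tau>\<bar> + norm et" "dist t1 t2 \<le> \<bar>\<tau> - L2\<bar> + norm et"
    using gen[of \<tau> et] t1e' by simp_all
  have sl: "\<sigma> \<ge> - L1 / 2"
  proof -
    have "l2 * L2 \<ge> 0" using l2 pos2 by simp
    moreover have "l1 * L1 \<le> (1/2) * L1" using l1 pos by (intro mult_right_mono) auto
    ultimately show ?thesis unfolding \<sigma>_def by linarith
  qed
  have su: "\<sigma> \<le> L2 / 2"
  proof -
    have "l1 * L1 \<ge> 0" using l1 pos by simp
    moreover have "l2 * L2 \<le> (1/2) * L2" using l2 pos2 by (intro mult_right_mono) auto
    ultimately show ?thesis unfolding \<sigma>_def by linarith
  qed
  have ne0: "0 \<le> norm es" "0 \<le> norm et" by simp_all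
  have ab: "\<bar>x\<bar> \<le> y" if "x \<le> y" "- x \<le> y" for x y :: real using that by linarith
  show ?thesis
  proof (cases "\<tau> < L2 - norm et")
    case True
    have "\<bar>\<tau>\<bar> \<le> \<tau>" "\<bar>\<tau> - L2\<bar> \<le> L2 - \<tau>" using True sl pos net ne0 \<tau>_def by (intro ab; linarith)+
    then show ?thesis using a2 True sl pos net ne0 \<tau>_def by auto
  next
    case F1: False
    show ?thesis
    proof (cases "\<sigma> > norm es")
      case True
      have "\<bar>\<sigma>\<bar> \<le> \<sigma>" "\<bar>\<sigma> - L2\<bar> \<le> L2 - \<sigma>" using True su pos le nes ne0 by (intro ab; linarith)+
      then show ?thesis using a1 True su pos le nes ne0 by auto
    next
      case False
      have "\<bar>\<sigma>\<bar> \<le> L1 / 40" using False F1 \<tau>_def nes net ne0 pos le by (intro ab; linarith)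
      moreover have "\<bar>\<tau> - L2\<bar> \<le> L1 / 40" using False F1 \<tau>_def nes net ne0 pos le by (intro ab; linarith)
      ultimately have "dist s1 s2 \<le> L1/10" "dist t1 t2 \<le> L1/10" using a1 a2 nes net by linarith+
      then show ?thesis by blast
    qed
  qed
qed



lemma short_step:
  assumes "a \<in> S" "b \<in> S" "dist a b < dist s t"
  shows "(a, b) \<in> {(a, b). a \<in> S \<and> b \<in> S \<and> a \<noteq> b \<and> dist a b \<le> dist s t \<and> {a, b} \<noteq> {s, t}}\<^sup>*"
proof (cases "a = b")
  case True then show ?thesis by simp
next
  case False
  have "{a, b} \<noteq> {s, t}"
  proof
    assume "{a, b} = {s, t}"
    then have "dist a b = dist s t" by (auto simp: doubleton_eq_iff dist_commute)
    then show False using assms(3) by simp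
  qed
  then show ?thesis using assms False by (intro r_into_rtrancl) auto
qed

lemma pair_contra:
  fixes s1 t1 s2 t2 x1 x2 :: "real^2" and l1 l2 L1 L2 :: real
  assumes fin: "finite S" and mst: "is_MST S E" and uniq: "\<And>E'. is_MST S E' \<Longrightarrow> E' = E"
   and f1: "{s1, t1} \<in> E" and f2: "{s2, t2} \<in> E" and neq: "{s1, t1} \<noteq> {s2, t2}"
   and L1: "L1 = dist s1 t1" and L2: "L2 = dist s2 t2" and pos: "0 < L1" and le: "L1 \<le> L2"
   and x1: "x1 = s1 + l1 *\<^sub>R (t1 - s1)" and l1: "0 \<le> l1" "l1 \<le> 1/2"
   and x2: "x2 = s2 + l2 *\<^sub>R (t2 - s2)" and l2: "0 \<le> l2" "l2 \<le> 1/2"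
   and dx: "norm (x1 - x2) \<le> L1/100"
   and du: "norm ((1/L1) *\<^sub>R (t1 - s1) - (1/L2) *\<^sub>R (t2 - s2)) \<le> 1/100"
  shows False
proof -
  let ?R = "{(a, b). a \<in> S \<and> b \<in> S \<and> a \<noteq> b \<and> dist a b \<le> dist s2 t2 \<and> {a, b} \<noteq> {s2, t2}}"
  have Esub: "E \<subseteq> edges_on S" using mst unfolding is_MST_def is_spanning_tree_def by simp
  have S1: "s1 \<in> S" "t1 \<in> S" "s1 \<noteq> t1" using f1 Esub edge_pair_in by blast+
  have S2: "s2 \<in> S" "t2 \<in> S" "s2 \<noteq> t2" using f2 Esub edge_pair_in by blast+
  have "(s2, t2) \<in> ?R\<^sup>*"
  proof -
    from core[OF L1 L2 pos le x1 l1 x2 l2 dx du]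
    consider "dist s1 s2 < L2" "dist s1 t2 < L2" | "dist t1 s2 < L2" "dist t1 t2 < L2"
      | "dist s1 s2 \<le> L1/10" "dist t1 t2 \<le> L1/10" by blast
    then show ?thesis
    proof cases
      case 1
      have "(s2, s1) \<in> ?R\<^sup>*" using 1 S1 S2 L2 by (intro short_step) (auto simp: dist_commute)
      moreover have "(s1, t2) \<in> ?R\<^sup>*" using 1 S1 S2 L2 by (intro short_step) auto
      ultimately show ?thesis by (rule rtrancl_trans)
    next
      case 2
      have "(s2, t1) \<in> ?R\<^sup>*" using 2 S1 S2 L2 by (intro short_step) (auto simp: dist_commute)
      moreover have "(t1, t2) \<in> ?R\<^sup>*" using 2 S1 S2 L2 by (intro short_step) auto
      ultimately show ?thesis by (rule rtrancl_trans)
    next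
      case 3
      have "(s2, s1) \<in> ?R\<^sup>*" using 3 S1 S2 L2 pos le by (intro short_step) (auto simp: dist_commute)
      moreover have "(s1, t1) \<in> ?R" using S1 L1 L2 le neq by auto
      moreover have "(t1, t2) \<in> ?R\<^sup>*" using 3 S1 S2 L2 pos le by (intro short_step) auto
      ultimately show ?thesis by (meson rtrancl_into_rtrancl rtrancl_trans)
    qed
  qed
  then show False using mst_path[OF fin mst uniq f2] by blast
qed



lemma floor_close:
  fixes a b k :: real
  assumes "\<lfloor>a * k\<rfloor> = \<lfloor>b * k\<rfloor>" "k > 0"
  shows "\<bar>a - b\<bar> < 1 / k"
proof -
  have h1: "of_int \<lfloor>a * k\<rfloor> \<le> a * k" "a * k < of_int \<lfloor>a * k\<rfloor> + 1" by (rule of_int_floor_le, rule real_of_int_floor_add_one_gt)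
  have h2: "of_int \<lfloor>b * k\<rfloor> \<le> b * k" "b * k < of_int \<lfloor>b * k\<rfloor> + 1" by (rule of_int_floor_le, rule real_of_int_floor_add_one_gt)
  have "\<bar>a * k - b * k\<bar> < 1" using h1 h2 assms(1) by linarith
  then have "\<bar>a - b\<bar> * k < 1" using assms(2) by (simp add: left_diff_distrib[symmetric] abs_mult)
  then show ?thesis using assms(2) by (simp add: field_simps)
qed

lemma norm2_le: "norm (v :: real^2) \<le> \<bar>v$1\<bar> + \<bar>v$2\<bar>"
  using norm_le_l1_cart[of v] by (simp add: sum_2)

lemma floor_range:
  fixes y :: real
  assumes "\<bar>y\<bar> \<le> 200"
  shows "\<lfloor>y\<rfloor> \<in> {-200..200}"
proof -
  have "-200 \<le> y" "y < 200 + 1" using assms by linarith+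
  then have "-200 \<le> \<lfloor>y\<rfloor>" "\<lfloor>y\<rfloor> \<le> 200" by (simp_all add: floor_le_iff le_floor_iff)
  then show ?thesis by simp
qed

lemma seg_choice:
  fixes p q s0 t0 :: "real^2"
  assumes "convex hull {p, q} \<inter> convex hull {s0, t0} \<noteq> {}"
  shows "\<exists>s t l x. {s, t} = {s0, t0} \<and> 0 \<le> l \<and> l \<le> 1/2 \<and> x = s + l *\<^sub>R (t - s) \<and> x \<in> closed_segment p q"
proof -
  obtain x where x: "x \<in> closed_segment p q" "x \<in> closed_segment s0 t0"
    using assms unfolding segment_convex_hull by blast
  then obtain u where u: "0 \<le> u" "u \<le> 1" "x = (1 - u) *\<^sub>R s0 + u *\<^sub>R t0" unfolding in_segment by blast
  show ?thesis
  proof (cases "u \<le> 1/2")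
    case True
    have "x = s0 + u *\<^sub>R (t0 - s0)" using u(3) by (simp add: algebra_simps)
    then show ?thesis using True u(1) x(1) by blast
  next
    case False
    have "x = t0 + (1 - u) *\<^sub>R (s0 - t0)" using u(3) by (simp add: algebra_simps)
    moreover have "{t0, s0} = {s0, t0}" by (rule insert_commute)
    moreover have "0 \<le> 1 - u" "1 - u \<le> 1/2" using False u by linarith+
    ultimately show ?thesis using x(1) by blast
  qed
qed

theorem lemma2:
  "\<exists>c::real. c > 0 \<and>
     (\<forall>P S :: point set. finite P \<longrightarrow> finite S \<longrightarrow> P \<inter> S = {} \<longrightarrow> generic (P \<union> S) \<longrightarrow>
        (\<forall>e\<in>MST P. real (card {f \<in> MST S. edge_len e \<le> edge_len f \<and> crosses e f}) \<le> c))"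
proof (intro exI[of _ "401^4"] conjI allI impI ballI)
  show "(0::real) < 401^4" by simp
  fix P S :: "point set" and e
  assume finP: "finite P" and finS: "finite S" and disj: "P \<inter> S = {}" and gen: "generic (P \<union> S)"
    and eP: "e \<in> MST P"
  have ex1: "\<exists>!E. is_MST Y E" if "Y \<subseteq> P \<union> S" for Y using gen that unfolding generic_def by blast
  have mstP: "is_MST P (MST P)" unfolding MST_def by (rule theI') (rule ex1, simp)
  have mstS: "is_MST S (MST S)" unfolding MST_def by (rule theI') (rule ex1, simp)
  have uniqS: "E' = MST S" if "is_MST S E'" for E'
    using ex1[of S] mstS that by blast
  have "e \<in> edges_on P" using eP mstP unfolding is_MST_def is_spanning_tree_def by blast
  then obtain p q where pq: "e = {p, q}" "p \<noteq> q" using edges_onD by blast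
  define lq where "lq = dist p q"
  have lpos: "lq > 0" using pq unfolding lq_def by simp
  have elen: "edge_len e = lq" unfolding pq lq_def by (rule edge_len_pair)
  define F where "F = {f \<in> MST S. edge_len e \<le> edge_len f \<and> crosses e f}"
  have SE: "MST S \<subseteq> edges_on S" using mstS unfolding is_MST_def is_spanning_tree_def by blast
  have "F \<subseteq> edges_on S" unfolding F_def using SE by blast
  then have finF: "finite F" using edges_on_finite[OF finS] by (rule finite_subset)
  define Q where "Q f z = (case z of (s, t, l, x) \<Rightarrow> {s, t} = f \<and> 0 \<le> l \<and> l \<le> 1/2 \<and>
       x = s + l *\<^sub>R (t - s) \<and> x \<in> closed_segment p q)" for f and z :: "point \<times> point \<times> real \<times> point"
  have "\<forall>f\<in>F. \<exists>z. Q f z"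
  proof
    fix f assume that: "f \<in> F"
    have fS: "f \<in> edges_on S" and cr: "crosses e f" using that SE unfolding F_def by auto
    obtain s0 t0 where st0: "f = {s0, t0}" using edges_onD[OF fS] by blast
    have "convex hull {p, q} \<inter> convex hull {s0, t0} \<noteq> {}" using cr unfolding crosses_def pq st0 .
    from seg_choice[OF this] obtain s t l x where "{s, t} = {s0, t0}" "0 \<le> l" "l \<le> 1/2"
      "x = s + l *\<^sub>R (t - s)" "x \<in> closed_segment p q" by blast
    then have "Q f (s, t, l, x)" unfolding Q_def st0 by simp
    then show "\<exists>z. Q f z" by blast
  qed
  then obtain g where g0: "\<forall>f\<in>F. Q f (g f)" by (blast dest: bchoice)
  have g: "Q f (g f)" if "f \<in> F" for f using g0 that by blast
  define cellof where "cellof s t x = (\<lfloor>(x - p)$1 * (200/lq)\<rfloor>, \<lfloor>(x - p)$2 * (200/lq)\<rfloor>,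
      \<lfloor>((1 / dist s t) *\<^sub>R (t - s))$1 * 200\<rfloor>, \<lfloor>((1 / dist s t) *\<^sub>R (t - s))$2 * 200\<rfloor>)"
    for s t x :: point
  define cell where "cell f = (case g f of (s, t, l, x) \<Rightarrow> cellof s t x)" for f
  have data: "\<exists>s t l x. {s, t} = f \<and> 0 \<le> l \<and> l \<le> 1/2 \<and>
       x = s + l *\<^sub>R (t - s) \<and> x \<in> closed_segment p q \<and> lq \<le> dist s t \<and> s \<noteq> t \<and>
       cell f = cellof s t x"
    if "f \<in> F" for f
  proof -
    obtain s t l x where gf: "g f = (s, t, l, x)" by (cases "g f") auto
    have q: "{s, t} = f" "0 \<le> l" "l \<le> 1/2" "x = s + l *\<^sub>R (t - s)" "x \<in> closed_segment p q"
      using g[OF that] unfolding gf Q_def by auto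
    have fM: "f \<in> MST S" and fl: "edge_len e \<le> edge_len f" using that unfolding F_def by auto
    have "f \<in> edges_on S" using fM SE by blast
    then have "s \<noteq> t" using q(1) edge_pair_in by metis
    have "lq \<le> dist s t" using fl elen q(1) edge_len_pair by metis
    moreover have "cell f = cellof s t x" unfolding cell_def gf by simp
    ultimately show ?thesis using q \<open>s \<noteq> t\<close> by blast
  qed
  have FM: "f \<in> MST S" if "f \<in> F" for f using that unfolding F_def by blast
  have inj: "inj_on cell F"
  proof (rule inj_onI, rule ccontr)
    fix f1 f2 assume f1: "f1 \<in> F" and f2: "f2 \<in> F" and ceq: "cell f1 = cell f2" and ne: "f1 \<noteq> f2"
    obtain s1 t1 l1 x1 where d1: "{s1, t1} = f1" "0 \<le> l1" "l1 \<le> 1/2" "x1 = s1 + l1 *\<^sub>R (t1 - s1)"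
      "x1 \<in> closed_segment p q" "lq \<le> dist s1 t1" "s1 \<noteq> t1" "cell f1 = cellof s1 t1 x1"
      using data[OF f1] by blast
    obtain s2 t2 l2 x2 where d2: "{s2, t2} = f2" "0 \<le> l2" "l2 \<le> 1/2" "x2 = s2 + l2 *\<^sub>R (t2 - s2)"
      "x2 \<in> closed_segment p q" "lq \<le> dist s2 t2" "s2 \<noteq> t2" "cell f2 = cellof s2 t2 x2"
      using data[OF f2] by blast
    define u1 where "u1 = (1 / dist s1 t1) *\<^sub>R (t1 - s1)"
    define u2 where "u2 = (1 / dist s2 t2) *\<^sub>R (t2 - s2)"
    have ceq': "cellof s1 t1 x1 = cellof s2 t2 x2" using ceq d1(8) d2(8) by simp
    have e1: "\<lfloor>(x1 - p)$1 * (200/lq)\<rfloor> = \<lfloor>(x2 - p)$1 * (200/lq)\<rfloor>"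
      and e2: "\<lfloor>(x1 - p)$2 * (200/lq)\<rfloor> = \<lfloor>(x2 - p)$2 * (200/lq)\<rfloor>"
      and e3: "\<lfloor>u1$1 * 200\<rfloor> = \<lfloor>u2$1 * 200\<rfloor>"
      and e4: "\<lfloor>u1$2 * 200\<rfloor> = \<lfloor>u2$2 * 200\<rfloor>"
      using ceq' unfolding cellof_def u1_def u2_def by simp_all
    have k: "200 / lq > 0" using lpos by simp
    have c1: "\<bar>(x1 - p)$1 - (x2 - p)$1\<bar> < 1 / (200/lq)" by (rule floor_close[OF e1 k])
    have c2: "\<bar>(x1 - p)$2 - (x2 - p)$2\<bar> < 1 / (200/lq)" by (rule floor_close[OF e2 k])
    have c3: "\<bar>u1$1 - u2$1\<bar> < 1/200" using floor_close[OF e3] by simp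
    have c4: "\<bar>u1$2 - u2$2\<bar> < 1/200" using floor_close[OF e4] by simp
    have "(1::real) / (200/lq) = lq/200" by simp
    then have c1': "\<bar>(x1 - x2)$1\<bar> < lq/200" and c2': "\<bar>(x1 - x2)$2\<bar> < lq/200" using c1 c2 by simp_all
    have nx: "norm (x1 - x2) \<le> lq/100"
      using norm2_le[of "x1 - x2"] c1' c2' by simp
    have nu: "norm (u1 - u2) \<le> 1/100"
      using norm2_le[of "u1 - u2"] c3 c4 by simp
    have fneq: "{s1, t1} \<noteq> {s2, t2}" using ne d1(1) d2(1) by simp
    have m1: "{s1, t1} \<in> MST S" "{s2, t2} \<in> MST S" using d1(1) d2(1) FM f1 f2 by auto
    show False
    proof (cases "dist s1 t1 \<le> dist s2 t2")
      case True
      have "0 < dist s1 t1" using d1(7) by simp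
      moreover have "norm (x1 - x2) \<le> dist s1 t1 / 100" using nx d1(6) by linarith
      moreover have "norm ((1 / dist s1 t1) *\<^sub>R (t1 - s1) - (1 / dist s2 t2) *\<^sub>R (t2 - s2)) \<le> 1/100"
        using nu unfolding u1_def u2_def .
      ultimately show False
        using pair_contra[OF finS mstS uniqS m1 fneq refl refl _ True d1(4) d1(2,3) d2(4) d2(2,3)] by blast
    next
      case False
      then have le: "dist s2 t2 \<le> dist s1 t1" by linarith
      have "0 < dist s2 t2" using d2(7) by simp
      moreover have "norm (x2 - x1) \<le> dist s2 t2 / 100" using nx d2(6) by (simp add: norm_minus_commute)
      moreover have "norm ((1 / dist s2 t2) *\<^sub>R (t2 - s2) - (1 / dist s1 t1) *\<^sub>R (t1 - s1)) \<le> 1/100"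
        using nu unfolding u1_def u2_def by (simp add: norm_minus_commute)
      ultimately show False
        using pair_contra[OF finS mstS uniqS m1(2,1) fneq[symmetric] refl refl _ le d2(4) d2(2,3) d1(4) d1(2,3)] by blast
    qed
  qed
  have range: "cell ` F \<subseteq> {-200..200} \<times> {-200..200} \<times> {-200..200} \<times> {-200..200}"
  proof
    fix c assume "c \<in> cell ` F"
    then obtain f where f: "f \<in> F" "c = cell f" by blast
    obtain s t l x where d: "{s, t} = f" "0 \<le> l" "l \<le> 1/2" "x = s + l *\<^sub>R (t - s)"
      "x \<in> closed_segment p q" "lq \<le> dist s t" "s \<noteq> t" "cell f = cellof s t x"
      using data[OF f(1)] by blast
    define u where "u = (1 / dist s t) *\<^sub>R (t - s)"
    have dpos: "dist s t > 0" using d(7) by simp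
    have "norm u = (1 / dist s t) * norm (t - s)" unfolding u_def using dpos by simp
    also have "norm (t - s) = dist s t" by (simp add: dist_norm norm_minus_commute)
    finally have nu: "norm u = 1" using dpos by simp
    have nxp: "norm (x - p) \<le> lq"
      using dist_in_closed_segment[OF d(5)] unfolding lq_def dist_norm by blast
    have b: "\<bar>(x - p)$i * (200/lq)\<bar> \<le> 200" for i
    proof -
      have "\<bar>(x - p)$i\<bar> \<le> lq" using component_le_norm_cart[of "x - p" i] nxp by linarith
      then have A: "\<bar>(x - p)$i\<bar> * (200/lq) \<le> lq * (200/lq)" using lpos by (intro mult_right_mono) auto
      have B: "\<bar>(x - p)$i * (200/lq)\<bar> = \<bar>(x - p)$i\<bar> * (200/lq)" using lpos by (subst abs_mult) simp
      have C: "lq * (200/lq) = 200" using lpos by simp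
      show ?thesis unfolding B using A unfolding C .
    qed
    have bu: "\<bar>u$i * 200\<bar> \<le> 200" for i
    proof -
      have "\<bar>u$i\<bar> \<le> 1" using component_le_norm_cart[of u i] nu by simp
      then show ?thesis by (simp add: abs_mult)
    qed
    have "c = cellof s t x" using f(2) d(8) by simp
    also have "\<dots> = (\<lfloor>(x - p)$1 * (200/lq)\<rfloor>, \<lfloor>(x - p)$2 * (200/lq)\<rfloor>, \<lfloor>u$1 * 200\<rfloor>, \<lfloor>u$2 * 200\<rfloor>)"
      unfolding cellof_def u_def ..
    finally show "c \<in> {-200..200} \<times> {-200..200} \<times> {-200..200} \<times> {-200..200}"
      using floor_range[OF b] floor_range[OF bu] by simp
  qed
  have "card F = card (cell ` F)" using inj by (simp add: card_image)
  also have "\<dots> \<le> card ({-200..200::int} \<times> {-200..200::int} \<times> {-200..200::int} \<times> {-200..200::int})"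
    using range by (intro card_mono) auto
  also have "\<dots> = 401^4" by (simp add: card_cartesian_product)
  finally have "card F \<le> 401^4" .
  then have "real (card F) \<le> real (401^4)" by (rule of_nat_mono)
  then show "real (card {f \<in> MST S. edge_len e \<le> edge_len f \<and> crosses e f}) \<le> 401^4"
    unfolding F_def[symmetric] by simp
qed

end
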